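(* Let $0<\alpha<1$ and $\beta=\alpha$. Then the essential norm of the $\beta$-Ces\`aro operator $C_\alpha:\mathcal{B}_\alpha^0\to\mathcal{B}_\alpha^0$ is $0$.
   Context: $\mathbb{D}=\{z\in\mathbb{C}:|z|<1\}$. For $\alpha>0$, the $\alpha$-Bloch space $\mathcal{B}_\alpha$ is the space of analytic functions $f$ on $\mathbb{D}$ with $\|f\|_{\mathcal{B}_\alpha}:=\sup_{z\in\mathbb{D}}(1-|z|^2)^\alpha|f'(z)|<\infty$. $\mathcal{B}_\alpha^0=\{f\in\mathcal{B}_\alpha: f(0)=0\}$, normed by $\|\cdot\|_{\mathcal{B}_\alpha}$. For $\beta\in\mathbb{R}$, $C_\beta(f)(z)=\int_0^z \frac{f(w)}{w(1-w)^\beta}\,dw$ (principal branch). The essential norm of a bounded operator $T:X\to Y$ between Banach spaces is $\|T\|_e=\inf\{\|T+K\|: K:X\to Y \text{ compact}\}$. *)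

theory Defs
  imports "HOL-Complex_Analysis.Complex_Analysis"
begin

definition bloch_norm :: "real \<Rightarrow> (complex \<Rightarrow> complex) \<Rightarrow> real" where
  "bloch_norm \<alpha> f = (SUP z\<in>ball 0 1. (1 - (cmod z)\<^sup>2) powr \<alpha> * cmod (deriv f z))"

definition bloch0 :: "real \<Rightarrow> (complex \<Rightarrow> complex) set" where
  "bloch0 \<alpha> = {f. f holomorphic_on ball 0 1 \<and> f 0 = 0 \<and>
      bdd_above ((\<lambda>z. (1 - (cmod z)\<^sup>2) powr \<alpha> * cmod (deriv f z)) ` ball 0 1)}"

definition cesaro :: "real \<Rightarrow> (complex \<Rightarrow> complex) \<Rightarrow> (complex \<Rightarrow> complex)" where
  "cesaro \<beta> f = (\<lambda>z. contour_integral (linepath 0 z)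
      (\<lambda>w. f w / (w * (1 - w) powr (complex_of_real \<beta>))))"

definition bloch_linear :: "real \<Rightarrow> ((complex \<Rightarrow> complex) \<Rightarrow> (complex \<Rightarrow> complex)) \<Rightarrow> bool" where
  "bloch_linear \<alpha> K \<longleftrightarrow>
     (\<forall>f\<in>bloch0 \<alpha>. K f \<in> bloch0 \<alpha>) \<and>
     (\<forall>f\<in>bloch0 \<alpha>. \<forall>g\<in>bloch0 \<alpha>. \<forall>z\<in>ball 0 1. K (\<lambda>w. f w + g w) z = K f z + K g z) \<and>
     (\<forall>f\<in>bloch0 \<alpha>. \<forall>c::complex. \<forall>z\<in>ball 0 1. K (\<lambda>w. c * f w) z = c * K f z)"

definition bloch_compact :: "real \<Rightarrow> ((complex \<Rightarrow> complex) \<Rightarrow> (complex \<Rightarrow> complex)) \<Rightarrow> bool" where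
  "bloch_compact \<alpha> K \<longleftrightarrow> bloch_linear \<alpha> K \<and>
     (\<forall>f :: nat \<Rightarrow> complex \<Rightarrow> complex. \<forall>B.
        (\<forall>n. f n \<in> bloch0 \<alpha> \<and> bloch_norm \<alpha> (f n) \<le> B) \<longrightarrow>
        (\<exists>r g. strict_mono r \<and> g \<in> bloch0 \<alpha> \<and>
           (\<lambda>n. bloch_norm \<alpha> (\<lambda>z. K (f (r n)) z - g z)) \<longlonglongrightarrow> 0))"

definition bloch_opnorm :: "real \<Rightarrow> ((complex \<Rightarrow> complex) \<Rightarrow> (complex \<Rightarrow> complex)) \<Rightarrow> real" where
  "bloch_opnorm \<alpha> T = Sup {bloch_norm \<alpha> (T f) | f. f \<in> bloch0 \<alpha> \<and> bloch_norm \<alpha> f \<le> 1}"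

definition bloch_essnorm :: "real \<Rightarrow> ((complex \<Rightarrow> complex) \<Rightarrow> (complex \<Rightarrow> complex)) \<Rightarrow> real" where
  "bloch_essnorm \<alpha> T = Inf {bloch_opnorm \<alpha> (\<lambda>f z. T f z + K f z) | K. bloch_compact \<alpha> K}"

end

theory Submission
  imports Defs
begin


definition qf :: "(complex \<Rightarrow> complex) \<Rightarrow> complex \<Rightarrow> complex" where
  "qf f z = (if z = 0 then deriv f 0 else f z / z)"

lemma qf_holo:
  assumes "f holomorphic_on ball 0 1" "f 0 = 0"
  shows "qf f holomorphic_on ball 0 1"
proof -
  have "(\<lambda>z. if z = 0 then deriv f 0 else (f z - f 0) / (z - 0)) holomorphic_on ball 0 1"
    by (rule pole_lemma[OF assms(1)]) auto
  moreover have "(\<lambda>z. if z = 0 then deriv f 0 else (f z - f 0) / (z - 0)) = qf f"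
    using assms(2) by (auto simp: qf_def fun_eq_iff)
  ultimately show ?thesis by simp
qed

lemma one_minus_not_nonpos: "z \<in> ball (0::complex) 1 \<Longrightarrow> 1 - z \<notin> \<real>\<^sub>\<le>\<^sub>0"
  by (auto simp: complex_nonpos_Reals_iff dist_norm)
     (smt (verit) abs_Re_le_cmod minus_complex.simps(1) one_complex.simps(1))

lemma pw_holo: "(\<lambda>w. (1 - w) powr (complex_of_real b)) holomorphic_on ball 0 1"
  by (intro holomorphic_intros) (use one_minus_not_nonpos in auto)

lemma pw_nz: "z \<in> ball (0::complex) 1 \<Longrightarrow> (1 - z) powr (complex_of_real b) \<noteq> 0"
  by (auto simp: dist_norm)

definition psi :: "real \<Rightarrow> (complex \<Rightarrow> complex) \<Rightarrow> complex \<Rightarrow> complex" where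
  "psi b f w = qf f w / (1 - w) powr (complex_of_real b)"

lemma psi_holo:
  assumes "f holomorphic_on ball 0 1" "f 0 = 0"
  shows "psi b f holomorphic_on ball 0 1"
  unfolding psi_def
  by (intro holomorphic_intros qf_holo assms pw_holo) (use pw_nz in auto)



lemma seg_ball: "a \<in> ball (0::complex) 1 \<Longrightarrow> b \<in> ball 0 1 \<Longrightarrow> closed_segment a b \<subseteq> ball 0 1"
  using convex_ball[of "0::complex" 1] by (simp add: convex_contains_segment)

lemma ball_prim:
  assumes "g holomorphic_on ball 0 1" "x \<in> ball (0::complex) 1"
  shows "((\<lambda>x. contour_integral (linepath 0 x) g) has_field_derivative g x) (at x)"
proof (rule triangle_contour_integrals_starlike_primitive[where S="ball 0 1"])
  show "continuous_on (ball 0 1) g" using assms(1) holomorphic_on_imp_continuous_on by blast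
  show "closed_segment 0 y \<subseteq> ball 0 1" if "y \<in> ball 0 1" for y :: complex
    by (meson centre_in_ball convex_ball convex_contains_segment that zero_less_one)
  fix b c assume bc: "closed_segment b c \<subseteq> ball (0::complex) 1"
  have "b \<in> ball 0 1" "c \<in> ball 0 1" using bc by auto
  have "(g has_contour_integral 0) (linepath 0 b +++ linepath b c +++ linepath c 0)"
  proof (rule Cauchy_theorem_convex_simple[OF assms(1) convex_ball])
    show "path_image (linepath 0 b +++ linepath b c +++ linepath c 0) \<subseteq> ball 0 1"
      using \<open>b \<in> ball 0 1\<close> \<open>c \<in> ball 0 1\<close> seg_ball[of 0 b] seg_ball[of b c] seg_ball[of c 0]
      by (auto simp: path_image_join)
  qed auto
  then show "contour_integral (linepath 0 b) g + contour_integral (linepath b c) g + contour_integral (linepath c 0) g = 0"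
    by (rule has_chain_integral_chain_integral3)
qed (use assms in auto)



lemma cesaro_hci:
  assumes "f holomorphic_on ball 0 1" "f 0 = 0" "z \<in> ball (0::complex) 1"
  shows "((\<lambda>w. f w / (w * (1 - w) powr (complex_of_real b))) has_contour_integral
           contour_integral (linepath 0 z) (psi b f)) (linepath 0 z)"
proof -
  have "psi b f contour_integrable_on linepath 0 z"
    by (rule contour_integrable_continuous_linepath,
        rule continuous_on_subset[OF holomorphic_on_imp_continuous_on[OF psi_holo[OF assms(1,2)]]])
       (use seg_ball[of 0 z] assms(3) in auto)
  then have "(psi b f has_contour_integral contour_integral (linepath 0 z) (psi b f)) (linepath 0 z)"
    by (rule has_contour_integral_integral)
  then have *: "((\<lambda>x. psi b f (linepath 0 z x) * (z - 0)) has_integral contour_integral (linepath 0 z) (psi b f)) {0..1}"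
    by (simp add: has_contour_integral_linepath)
  show ?thesis
    unfolding has_contour_integral_linepath
  proof (rule has_integral_spike[OF negligible_sing[of 0] _ *])
    fix t assume t: "t \<in> {0..1::real} - {0}"
    show "f (linepath 0 z t) / (linepath 0 z t * (1 - linepath 0 z t) powr complex_of_real b) * (z - 0) =
          psi b f (linepath 0 z t) * (z - 0)"
    proof (cases "z = 0")
      case False
      with t have "linepath 0 z t \<noteq> 0" by (auto simp: linepath_def)
      then show ?thesis by (simp add: psi_def qf_def)
    qed simp
  qed
qed

lemma cesaro_eq:
  assumes "f holomorphic_on ball 0 1" "f 0 = 0" "z \<in> ball (0::complex) 1"
  shows "cesaro b f z = contour_integral (linepath 0 z) (psi b f)"
  unfolding cesaro_def using contour_integral_unique[OF cesaro_hci[OF assms]] .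

lemma cesaro_deriv:
  assumes "f holomorphic_on ball 0 1" "f 0 = 0" "z \<in> ball (0::complex) 1"
  shows "(cesaro b f has_field_derivative psi b f z) (at z)"
proof -
  have "((\<lambda>x. contour_integral (linepath 0 x) (psi b f)) has_field_derivative psi b f z) (at z)"
    by (rule ball_prim[OF psi_holo[OF assms(1,2)] assms(3)])
  then show ?thesis
    by (rule has_field_derivative_transform_within_open[where S="ball 0 1"])
       (use assms cesaro_eq in auto)
qed



lemma ftc_g:
  fixes a r s B :: real
  assumes "0 \<le> a" "a \<le> 1" "0 \<le> r" "r < 1" "0 < s"
  shows "((\<lambda>t. B * (1 - a) * r * (1 - (a + t * (1 - a)) * r) powr (s - 1)) has_integral
           B * ((1 - a * r) powr s - (1 - r) powr s) / s) {0..1}"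
proof -
  define F where "F t = - B * (1 - (a + t * (1 - a)) * r) powr s / s" for t
  have pos: "0 < 1 - (a + t * (1 - a)) * r" if "t \<in> {0..1}" for t
  proof -
    have "a + t * (1 - a) \<le> 1" using that assms
      by (smt (verit, ccfv_SIG) atLeastAtMost_iff mult_left_le_one_le)
    moreover have "0 \<le> a + t * (1 - a)" using that assms by auto
    ultimately have "(a + t * (1 - a)) * r \<le> r" using assms by (simp add: mult_left_le_one_le)
    then show ?thesis using assms by linarith
  qed
  have "(F has_vector_derivative B * (1 - a) * r * (1 - (a + t * (1 - a)) * r) powr (s - 1)) (at t within {0..1})"
    if "t \<in> {0..1}" for t
  proof -
    have d1: "((\<lambda>t. 1 - (a + t * (1 - a)) * r) has_real_derivative (- ((1 - a) * r))) (at t)"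
      by (auto intro!: derivative_eq_intros)
    have d2: "((\<lambda>t. (1 - (a + t * (1 - a)) * r) powr s) has_real_derivative
        s * (1 - (a + t * (1 - a)) * r) powr (s - of_nat 1) * (- ((1 - a) * r))) (at t)"
      by (rule DERIV_fun_powr[OF d1 pos[OF that]])
    have "(F has_real_derivative (- B / s) * (s * (1 - (a + t * (1 - a)) * r) powr (s - 1) * (- ((1 - a) * r)))) (at t)"
      unfolding F_def using DERIV_cmult[OF d2, of "- B / s"] by (simp add: field_simps)
    then show ?thesis
      using assms by (auto simp: has_real_derivative_iff_has_vector_derivative algebra_simps
          intro: has_vector_derivative_at_within)
  qed
  from fundamental_theorem_of_calculus[OF zero_le_one this]
  have "((\<lambda>t. B * (1 - a) * r * (1 - (a + t * (1 - a)) * r) powr (s - 1)) has_integral F 1 - F 0) {0..1}" .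
  moreover have "F 1 - F 0 = B * ((1 - a * r) powr s - (1 - r) powr s) / s"
    using assms by (simp add: F_def diff_divide_distrib right_diff_distrib)
  ultimately show ?thesis by simp
qed

lemma radial_bound:
  assumes hol: "f holomorphic_on ball 0 1"
    and wb: "\<And>w. w \<in> ball 0 1 \<Longrightarrow> (1 - (cmod w)\<^sup>2) powr \<alpha> * cmod (deriv f w) \<le> B"
    and al: "0 < \<alpha>" "\<alpha> < 1" and z: "z \<in> ball 0 1" and a: "0 \<le> a" "a \<le> 1"
  shows "cmod (f z - f (of_real a * z)) \<le> B * ((1 - a * cmod z) powr (1-\<alpha>) - (1 - cmod z) powr (1-\<alpha>)) / (1-\<alpha>)"
proof -
  define r where "r = cmod z"
  have r: "0 \<le> r" "r < 1" using z by (auto simp: r_def)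
  have B0: "0 \<le> B" using wb[of 0] by simp (smt (verit) norm_ge_zero)
  have az: "of_real a * z \<in> ball 0 1"
    using z a by (simp add: norm_mult) (smt (verit) mult_left_le_one_le norm_ge_zero)
  have "(deriv f has_contour_integral (f (pathfinish (linepath (of_real a * z) z)) - f (pathstart (linepath (of_real a * z) z))))
          (linepath (of_real a * z) z)"
    by (rule contour_integral_primitive[where S="ball 0 1"])
       (use hol holomorphic_derivI seg_ball[OF az z] in auto)
  then have hi: "((\<lambda>t. deriv f (linepath (of_real a * z) z t) * (z - of_real a * z)) has_integral (f z - f (of_real a * z))) {0..1}"
    by (simp add: has_contour_integral_linepath)
  have gi: "((\<lambda>t. B * (1 - a) * r * (1 - (a + t * (1 - a)) * r) powr ((1-\<alpha>) - 1)) has_integral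
           B * ((1 - a * r) powr (1-\<alpha>) - (1 - r) powr (1-\<alpha>)) / (1-\<alpha>)) {0..1}"
    by (rule ftc_g) (use a r al in auto)
  have bd: "cmod (deriv f (linepath (of_real a * z) z t) * (z - of_real a * z))
              \<le> B * (1 - a) * r * (1 - (a + t * (1 - a)) * r) powr ((1-\<alpha>) - 1)" if t: "t \<in> {0..1}" for t
  proof -
    define u where "u = a + t * (1 - a)"
    have u: "0 \<le> u" "u \<le> 1" using t a unfolding u_def
      by auto (smt (verit, ccfv_SIG) mult_left_le_one_le)
    have lp: "linepath (of_real a * z) z t = of_real u * z"
      by (simp add: linepath_def u_def scaleR_conv_of_real algebra_simps)
    have w: "of_real u * z \<in> ball 0 1" "cmod (of_real u * z) = u * r"
      using u r by (auto simp: norm_mult r_def) (smt (verit) mult_left_le_one_le norm_ge_zero)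
    have ur: "u * r < 1" "0 \<le> u * r" using u r by (auto simp: mult_le_one) (smt (verit) mult_left_le_one_le)
    have "(1 - u * r) powr \<alpha> \<le> (1 - (u * r)\<^sup>2) powr \<alpha>"
      by (rule powr_mono2) (use al ur mult_left_le_one_le[of "u*r" "u*r"] in \<open>auto simp: power2_eq_square\<close>)
    then have "(1 - u * r) powr \<alpha> * cmod (deriv f (of_real u * z)) \<le> B"
      using wb[OF w(1)] w(2) by (smt (verit) mult_right_mono norm_ge_zero)
    then have "cmod (deriv f (of_real u * z)) \<le> B / (1 - u * r) powr \<alpha>"
      using ur by (simp add: field_simps)
    moreover have "B / (1 - u * r) powr \<alpha> = B * (1 - u * r) powr ((1-\<alpha>) - 1)"
      by (simp add: powr_minus_divide)
    moreover have "cmod (z - of_real a * z) = (1 - a) * r"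
    proof -
      have "z - of_real a * z = of_real (1 - a) * z" by (simp add: algebra_simps)
      then show ?thesis using a by (simp only: norm_mult r_def norm_of_real)
    qed
    ultimately have "cmod (deriv f (of_real u * z)) * cmod (z - of_real a * z) \<le> B * (1 - u * r) powr ((1-\<alpha>) - 1) * ((1 - a) * r)"
      using a r by (metis mult_right_mono mult_nonneg_nonneg diff_ge_0_iff_ge)
    then show ?thesis
      using lp by (simp add: norm_mult u_def mult_ac)
  qed
  have "cmod (integral {0..1} (\<lambda>t. deriv f (linepath (of_real a * z) z t) * (z - of_real a * z)))
        \<le> integral {0..1} (\<lambda>t. B * (1 - a) * r * (1 - (a + t * (1 - a)) * r) powr ((1-\<alpha>) - 1))"
    by (rule integral_norm_bound_integral) (use hi gi bd in auto)
  then show ?thesis using integral_unique[OF hi] integral_unique[OF gi] by (simp add: r_def)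
qed



lemma powr_ge_self: "0 \<le> x \<Longrightarrow> x \<le> 1 \<Longrightarrow> 0 < s \<Longrightarrow> s \<le> 1 \<Longrightarrow> x \<le> x powr (s::real)"
  using powr_mono'[of s 1 x] by (cases "x = 0") auto

lemma powr_subadd:
  fixes x y s :: real
  assumes "0 \<le> y" "y \<le> x" "0 < s" "s \<le> 1"
  shows "x powr s \<le> y powr s + (x - y) powr s"
proof (cases "x = 0")
  case True then show ?thesis using assms by simp
next
  case False
  then have x: "0 < x" using assms by simp
  have "y / x \<le> (y / x) powr s" by (rule powr_ge_self) (use assms x in auto)
  moreover have "(x - y) / x \<le> ((x - y) / x) powr s" by (rule powr_ge_self) (use assms x in auto)
  ultimately have "y / x + (x - y) / x \<le> y powr s / x powr s + (x - y) powr s / x powr s"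
    by (simp add: powr_divide)
  moreover have "y / x + (x - y) / x = 1" using x by (simp add: field_simps)
  ultimately have "1 \<le> (y powr s + (x - y) powr s) / x powr s"
    by (simp add: add_divide_distrib)
  then show ?thesis using x by (simp add: le_divide_eq)
qed

lemma q_bound:
  assumes hol: "f holomorphic_on ball 0 1" and f0: "f 0 = 0"
    and wb: "\<And>w. w \<in> ball 0 1 \<Longrightarrow> (1 - (cmod w)\<^sup>2) powr \<alpha> * cmod (deriv f w) \<le> B"
    and al: "0 < \<alpha>" "\<alpha> < 1" and z: "z \<in> ball 0 1"
  shows "cmod (qf f z) \<le> B / (1 - \<alpha>)"
proof -
  have B0: "0 \<le> B" using wb[of 0] by simp (smt (verit) norm_ge_zero)
  show ?thesis
  proof (cases "z = 0")
    case True
    have "cmod (deriv f 0) \<le> B" using wb[of 0] by simp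
    also have "B \<le> B / (1 - \<alpha>)" using B0 al mult_left_mono[of "1-\<alpha>" 1 B] by (simp add: le_divide_eq)
    finally show ?thesis using True by (simp add: qf_def)
  next
    case False
    define r where "r = cmod z"
    have r: "0 < r" "r < 1" using z False by (auto simp: r_def)
    have "cmod (f z) \<le> B * ((1 - 0 * r) powr (1-\<alpha>) - (1 - r) powr (1-\<alpha>)) / (1-\<alpha>)"
      using radial_bound[OF hol wb al z, of 0] f0 by (simp add: r_def)
    also have "\<dots> \<le> B * r / (1 - \<alpha>)"
    proof -
      have "1 - r \<le> (1 - r) powr (1 - \<alpha>)" by (rule powr_ge_self) (use r al in auto)
      then show ?thesis using B0 al by (intro divide_right_mono mult_left_mono) auto
    qed
    finally show ?thesis using r False by (simp add: qf_def norm_divide r_def field_simps)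
  qed
qed

lemma tail_bound:
  assumes hol: "f holomorphic_on ball 0 1"
    and wb: "\<And>w. w \<in> ball 0 1 \<Longrightarrow> (1 - (cmod w)\<^sup>2) powr \<alpha> * cmod (deriv f w) \<le> B"
    and al: "0 < \<alpha>" "\<alpha> < 1" and z: "z \<in> ball 0 1" and a: "0 \<le> a" "a \<le> 1"
  shows "cmod (f z - f (of_real a * z)) \<le> B * (1 - a) powr (1 - \<alpha>) / (1 - \<alpha>)"
proof -
  have B0: "0 \<le> B" using wb[of 0] by simp (smt (verit) norm_ge_zero)
  define r where "r = cmod z"
  have r: "0 \<le> r" "r < 1" using z by (auto simp: r_def)
  have ar: "a * r \<le> r" using a r by (simp add: mult_left_le_one_le)
  have "(1 - a * r) powr (1-\<alpha>) \<le> (1 - r) powr (1-\<alpha>) + ((1 - a * r) - (1 - r)) powr (1-\<alpha>)"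
    by (rule powr_subadd) (use r al ar in auto)
  also have "(1 - a * r) - (1 - r) = r * (1 - a)" by (simp add: algebra_simps)
  also have "(r * (1 - a)) powr (1-\<alpha>) \<le> (1 - a) powr (1-\<alpha>)"
    by (rule powr_mono2) (use a r al in \<open>auto simp: mult_left_le_one_le\<close>)
  finally have *: "(1 - a * r) powr (1-\<alpha>) - (1 - r) powr (1-\<alpha>) \<le> (1 - a) powr (1-\<alpha>)" by simp
  have "cmod (f z - f (of_real a * z)) \<le> B * ((1 - a * r) powr (1-\<alpha>) - (1 - r) powr (1-\<alpha>)) / (1-\<alpha>)"
    using radial_bound[OF hol wb al z a] by (simp add: r_def)
  also have "\<dots> \<le> B * (1 - a) powr (1 - \<alpha>) / (1 - \<alpha>)"
    using * B0 al by (intro divide_right_mono mult_left_mono) auto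
  finally show ?thesis .
qed



definition bb :: "real \<Rightarrow> (complex \<Rightarrow> complex) \<Rightarrow> bool" where
  "bb \<alpha> f \<longleftrightarrow> f holomorphic_on ball 0 1 \<and>
      bdd_above ((\<lambda>z. (1 - (cmod z)\<^sup>2) powr \<alpha> * cmod (deriv f z)) ` ball 0 1)"

lemma bloch0_iff: "f \<in> bloch0 \<alpha> \<longleftrightarrow> bb \<alpha> f \<and> f 0 = 0"
  by (auto simp: bloch0_def bb_def)

lemma bb_upper: "bb \<alpha> f \<Longrightarrow> z \<in> ball 0 1 \<Longrightarrow> (1 - (cmod z)\<^sup>2) powr \<alpha> * cmod (deriv f z) \<le> bloch_norm \<alpha> f"
  unfolding bb_def bloch_norm_def by (auto intro: cSUP_upper)

lemma bloch_norm_le: "(\<And>z. z \<in> ball 0 1 \<Longrightarrow> (1 - (cmod z)\<^sup>2) powr \<alpha> * cmod (deriv f z) \<le> B) \<Longrightarrow> bloch_norm \<alpha> f \<le> B"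
  unfolding bloch_norm_def by (rule cSUP_least) auto

lemma bb_nonneg: "bb \<alpha> f \<Longrightarrow> 0 \<le> bloch_norm \<alpha> f"
  using bb_upper[of \<alpha> f 0] by simp (smt (verit) norm_ge_zero)

lemma bb_intro: "f holomorphic_on ball 0 1 \<Longrightarrow> (\<And>z. z \<in> ball 0 1 \<Longrightarrow> (1 - (cmod z)\<^sup>2) powr \<alpha> * cmod (deriv f z) \<le> B) \<Longrightarrow> bb \<alpha> f"
  unfolding bb_def by (auto intro!: bdd_aboveI2[where M=B])

lemma deriv_cong_ball: "(\<And>z. z \<in> ball 0 1 \<Longrightarrow> f z = g z) \<Longrightarrow> w \<in> ball (0::complex) 1 \<Longrightarrow> deriv f w = deriv g w"
  by (rule deriv_cong_ev) (auto simp: eventually_nhds intro!: exI[of _ "ball 0 1"])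

lemma bloch_norm_cong: "(\<And>z. z \<in> ball 0 1 \<Longrightarrow> f z = g z) \<Longrightarrow> bloch_norm \<alpha> f = bloch_norm \<alpha> g"
  unfolding bloch_norm_def by (rule SUP_cong) (use deriv_cong_ball[of f g] in auto)

lemma bloch_norm_zero: "bloch_norm \<alpha> (\<lambda>z. 0) = 0"
  unfolding bloch_norm_def by simp

lemma zero_bloch0: "(\<lambda>z. 0) \<in> bloch0 \<alpha>"
  unfolding bloch0_iff by (auto intro!: bb_intro[where B=0])

lemma deriv_add_ball: "f holomorphic_on ball 0 1 \<Longrightarrow> g holomorphic_on ball 0 1 \<Longrightarrow> z \<in> ball 0 1 \<Longrightarrow>
   deriv (\<lambda>w. f w + g w) z = deriv f z + deriv g z"
  by (rule deriv_add) (auto intro: holomorphic_on_imp_differentiable_at)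

lemma deriv_diff_ball: "f holomorphic_on ball 0 1 \<Longrightarrow> g holomorphic_on ball 0 1 \<Longrightarrow> z \<in> ball 0 1 \<Longrightarrow>
   deriv (\<lambda>w. f w - g w) z = deriv f z - deriv g z"
  by (rule deriv_diff) (auto intro: holomorphic_on_imp_differentiable_at)

lemma deriv_minus_ball: "f holomorphic_on ball 0 1 \<Longrightarrow> z \<in> ball 0 1 \<Longrightarrow>
   deriv (\<lambda>w. - f w) z = - deriv f z"
  by (rule deriv_minus) (auto intro: holomorphic_on_imp_differentiable_at)

lemma wt_ineq:
  assumes "z \<in> ball (0::complex) 1" "0 < \<alpha>" "\<alpha> \<le> 1"
  shows "(1 - (cmod z)\<^sup>2) powr \<alpha> * cmod (c / (1 - z) powr (complex_of_real \<alpha>)) \<le> 2 * cmod c"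
proof -
  have z: "cmod z < 1" using assms by auto
  have nz: "0 < cmod (1 - z)" using z by auto
  have "1 - (cmod z)\<^sup>2 \<le> 2 * cmod (1 - z)"
  proof -
    have "1 - cmod z \<le> cmod (1 - z)" using norm_triangle_ineq2[of 1 z] by simp
    moreover have "1 - (cmod z)\<^sup>2 = (1 - cmod z) * (1 + cmod z)" by (simp add: power2_eq_square algebra_simps)
    moreover have "(1 - cmod z) * (1 + cmod z) \<le> (1 - cmod z) * 2" using z by (intro mult_left_mono) auto
    ultimately show ?thesis by (smt (verit) mult_left_mono)
  qed
  then have "(1 - (cmod z)\<^sup>2) powr \<alpha> \<le> (2 * cmod (1 - z)) powr \<alpha>"
    using z assms by (intro powr_mono2) (auto simp: abs_square_less_1 power_le_one)
  also have "\<dots> = 2 powr \<alpha> * cmod (1 - z) powr \<alpha>" by (simp add: powr_mult)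
  also have "\<dots> \<le> 2 * cmod (1 - z) powr \<alpha>"
    using powr_mono[of \<alpha> 1 2] assms by (intro mult_right_mono) auto
  finally have *: "(1 - (cmod z)\<^sup>2) powr \<alpha> \<le> 2 * cmod (1 - z) powr \<alpha>" .
  have n: "cmod ((1 - z) powr (complex_of_real \<alpha>)) = cmod (1 - z) powr \<alpha>"
    by (simp add: norm_powr_real_powr')
  have "(1 - (cmod z)\<^sup>2) powr \<alpha> * cmod (c / (1 - z) powr (complex_of_real \<alpha>))
       = (1 - (cmod z)\<^sup>2) powr \<alpha> / cmod (1 - z) powr \<alpha> * cmod c"
    by (simp add: norm_divide n)
  also have "\<dots> \<le> 2 * cmod c"
    using * nz by (intro mult_right_mono) (auto simp: divide_le_eq)
  finally show ?thesis .
qed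



lemma ces_holo:
  assumes "f holomorphic_on ball 0 1" "f 0 = 0"
  shows "cesaro b f holomorphic_on ball 0 1"
  unfolding holomorphic_on_open[OF open_ball] using cesaro_deriv[OF assms] by blast

lemma ces_deriv_eq:
  assumes "f holomorphic_on ball 0 1" "f 0 = 0" "z \<in> ball 0 1"
  shows "deriv (cesaro b f) z = psi b f z"
  using cesaro_deriv[OF assms] by (rule DERIV_imp_deriv)

lemma ces_zero: "cesaro b f 0 = 0"
  by (simp add: cesaro_def)

lemma ces_wt:
  assumes "f \<in> bloch0 \<alpha>" "0 < \<alpha>" "\<alpha> < 1" "z \<in> ball 0 1"
  shows "(1 - (cmod z)\<^sup>2) powr \<alpha> * cmod (deriv (cesaro \<alpha> f) z) \<le> 2 * (bloch_norm \<alpha> f / (1 - \<alpha>))"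
proof -
  have f: "bb \<alpha> f" "f 0 = 0" using assms(1) by (auto simp: bloch0_iff)
  have hol: "f holomorphic_on ball 0 1" using f by (simp add: bb_def)
  have "(1 - (cmod z)\<^sup>2) powr \<alpha> * cmod (deriv (cesaro \<alpha> f) z) \<le> 2 * cmod (qf f z)"
    using wt_ineq[OF assms(4) assms(2), of "qf f z"] assms
    by (simp add: ces_deriv_eq[OF hol f(2) assms(4)] psi_def)
  also have "\<dots> \<le> 2 * (bloch_norm \<alpha> f / (1 - \<alpha>))"
    using q_bound[OF hol f(2) bb_upper[OF f(1)] assms(2,3,4)] by simp
  finally show ?thesis .
qed

lemma ces_bloch0:
  assumes "f \<in> bloch0 \<alpha>" "0 < \<alpha>" "\<alpha> < 1"
  shows "cesaro \<alpha> f \<in> bloch0 \<alpha>"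
proof -
  have f: "bb \<alpha> f" "f 0 = 0" using assms(1) by (auto simp: bloch0_iff)
  have hol: "f holomorphic_on ball 0 1" using f by (simp add: bb_def)
  show ?thesis unfolding bloch0_iff
    using ces_wt[OF assms] ces_holo[OF hol f(2)] by (auto intro!: bb_intro simp: ces_zero)
qed

lemma neg_bloch0:
  assumes "f \<in> bloch0 \<alpha>"
  shows "(\<lambda>z. - f z) \<in> bloch0 \<alpha>" "bloch_norm \<alpha> (\<lambda>z. - f z) = bloch_norm \<alpha> f"
proof -
  have f: "bb \<alpha> f" "f 0 = 0" using assms(1) by (auto simp: bloch0_iff)
  have hol: "f holomorphic_on ball 0 1" using f by (simp add: bb_def)
  have d: "deriv (\<lambda>w. - f w) z = - deriv f z" if "z \<in> ball 0 1" for z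
    using deriv_minus_ball[OF hol that] .
  show "(\<lambda>z. - f z) \<in> bloch0 \<alpha>" unfolding bloch0_iff
    using f hol bb_upper[OF f(1)] d by (auto intro!: bb_intro holomorphic_intros)
  show "bloch_norm \<alpha> (\<lambda>z. - f z) = bloch_norm \<alpha> f"
    unfolding bloch_norm_def by (rule SUP_cong) (auto simp: d)
qed

lemma ces_integrable:
  assumes "f holomorphic_on ball 0 1" "f 0 = 0" "z \<in> ball (0::complex) 1"
  shows "(\<lambda>w. f w / (w * (1 - w) powr (complex_of_real b))) contour_integrable_on linepath 0 z"
  using cesaro_hci[OF assms] by (auto simp: contour_integrable_on_def)

lemma ces_add:
  assumes "f holomorphic_on ball 0 1" "f 0 = 0" "g holomorphic_on ball 0 1" "g 0 = 0" "z \<in> ball (0::complex) 1"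
  shows "cesaro b (\<lambda>w. f w + g w) z = cesaro b f z + cesaro b g z"
  unfolding cesaro_def add_divide_distrib
  by (rule contour_integral_add) (use ces_integrable assms in auto)

lemma ces_mult:
  assumes "f holomorphic_on ball 0 1" "f 0 = 0" "z \<in> ball (0::complex) 1"
  shows "cesaro b (\<lambda>w. c * f w) z = c * cesaro b f z"
  unfolding cesaro_def times_divide_eq_right[symmetric]
  by (rule contour_integral_lmul) (use ces_integrable assms in auto)

lemma K0_linear:
  assumes "0 < \<alpha>" "\<alpha> < 1"
  shows "bloch_linear \<alpha> (\<lambda>f z. - cesaro \<alpha> f z)"
proof -
  have H: "f holomorphic_on ball 0 1" "f 0 = 0" if "f \<in> bloch0 \<alpha>" for f
    using that by (auto simp: bloch0_iff bb_def)
  have A: "cesaro \<alpha> (\<lambda>w. f w + g w) z = cesaro \<alpha> f z + cesaro \<alpha> g z"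
    if "f \<in> bloch0 \<alpha>" "g \<in> bloch0 \<alpha>" "z \<in> ball 0 1" for f g z
    using ces_add[OF H[OF that(1)] H[OF that(2)] that(3)] .
  have M: "cesaro \<alpha> (\<lambda>w. c * f w) z = c * cesaro \<alpha> f z"
    if "f \<in> bloch0 \<alpha>" "z \<in> ball 0 1" for f z c
    using ces_mult[OF H[OF that(1)] that(2)] .
  show ?thesis
    unfolding bloch_linear_def
    using neg_bloch0(1)[OF ces_bloch0[OF _ assms]] A M
    by auto
qed



lemma f_eq_qf: "f 0 = 0 \<Longrightarrow> f w = w * qf f w"
  by (auto simp: qf_def)

lemma scal_ball:
  assumes "0 \<le> a" "a \<le> 1" "z \<in> ball (0::complex) 1"
  shows "of_real a * z \<in> ball 0 1" "cmod (of_real a * z) \<le> a"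
proof -
  have "cmod (of_real a * z) = a * cmod z" using assms by (simp add: norm_mult)
  moreover have "a * cmod z \<le> a" using assms mult_left_mono[of "cmod z" 1 a] by simp
  moreover have "a * cmod z \<le> cmod z" using assms by (simp add: mult_left_le_one_le)
  ultimately show "of_real a * z \<in> ball 0 1" "cmod (of_real a * z) \<le> a" using assms by auto
qed

lemma unif_core:
  assumes al: "0 < \<alpha>" "\<alpha> < 1"
    and hol: "\<And>n. fs n holomorphic_on ball 0 1" and f0: "\<And>n. fs n 0 = 0"
    and wb: "\<And>n w. w \<in> ball 0 1 \<Longrightarrow> (1 - (cmod w)\<^sup>2) powr \<alpha> * cmod (deriv (fs n) w) \<le> B"
    and conv: "\<And>w. w \<in> ball 0 1 \<Longrightarrow> (\<lambda>n. qf (fs n) w) \<longlonglongrightarrow> Q w"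
    and unif: "\<And>\<rho> e. \<rho> < 1 \<Longrightarrow> e > 0 \<Longrightarrow> eventually (\<lambda>n. \<forall>x\<in>cball 0 \<rho>. cmod (qf (fs n) x - Q x) < e) sequentially"
    and ep: "\<epsilon> > 0"
  shows "eventually (\<lambda>n. \<forall>z\<in>ball 0 1. cmod (qf (fs n) z - Q z) \<le> \<epsilon>) sequentially"
proof -
  define s where "s = 1 - \<alpha>"
  have s: "0 < s" "s < 1" using al by (auto simp: s_def)
  have B0: "0 \<le> B" using wb[of 0 0] by simp (smt (verit) norm_ge_zero)
  define x where "x = \<epsilon> * s / (8 * (B + 1))"
  have x: "0 < x" using ep s B0 by (simp add: x_def)
  define \<delta> where "\<delta> = min (1/2) (x powr (1/s))"
  have \<delta>: "0 < \<delta>" "\<delta> \<le> 1/2" using x by (auto simp: \<delta>_def)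
  have "\<delta> powr s \<le> (x powr (1/s)) powr s"
    by (rule powr_mono2) (use s \<delta> in \<open>auto simp: \<delta>_def\<close>)
  also have "\<dots> = x" using s x by (simp add: powr_powr)
  finally have \<delta>s: "\<delta> powr s \<le> x" .
  define \<rho> where "\<rho> = 1 - \<delta>"
  have \<rho>: "1/2 \<le> \<rho>" "\<rho> < 1" using \<delta> by (auto simp: \<rho>_def)
  have \<rho>01: "0 \<le> \<rho>" "\<rho> \<le> 1" using \<rho> by linarith+
  define \<tau> where "\<tau> = B * (1 - \<rho>) powr (1 - \<alpha>) / (1 - \<alpha>)"
  have \<tau>: "\<tau> \<le> \<epsilon> / 8"
  proof -
    have "\<tau> = B * \<delta> powr s / s" by (simp add: \<tau>_def \<rho>_def s_def)
    also have "\<dots> \<le> B * x / s" using \<delta>s B0 s by (intro divide_right_mono mult_left_mono) auto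
    also have "\<dots> = \<epsilon> * (B / (B + 1)) / 8" using s B0 by (simp add: x_def divide_simps)
    also have "\<dots> \<le> \<epsilon> * 1 / 8" using ep B0 by (intro divide_right_mono mult_left_mono) auto
    finally show ?thesis by simp
  qed
  define F where "F w = w * Q w" for w
  have Fconv: "(\<lambda>n. fs n w) \<longlonglongrightarrow> F w" if "w \<in> ball 0 1" for w
  proof -
    have "(\<lambda>n. w * qf (fs n) w) \<longlonglongrightarrow> F w" unfolding F_def by (intro tendsto_intros conv that)
    then show ?thesis using f_eq_qf[of "fs n" w for n, OF f0] by simp
  qed
  have tail: "cmod (fs n z - fs n (of_real \<rho> * z)) \<le> \<tau>" if "z \<in> ball 0 1" for n z
    unfolding \<tau>_def by (rule tail_bound[OF hol wb al that \<rho>01])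
  have tailF: "cmod (F z - F (of_real \<rho> * z)) \<le> \<tau>" if z: "z \<in> ball 0 1" for z
  proof -
    have rz: "of_real \<rho> * z \<in> ball 0 1" using scal_ball[OF \<rho>01 z] by simp
    have "(\<lambda>n. fs n z - fs n (of_real \<rho> * z)) \<longlonglongrightarrow> F z - F (of_real \<rho> * z)"
      by (intro tendsto_intros Fconv z rz)
    then show ?thesis
      by (rule Lim_norm_ubound[OF trivial_limit_sequentially]) (use tail[OF z] in auto)
  qed
  have ev: "eventually (\<lambda>n. \<forall>x\<in>cball 0 \<rho>. cmod (qf (fs n) x - Q x) < \<epsilon> / 4) sequentially"
    using unif[OF \<rho>(2), of "\<epsilon> / 4"] ep by simp
  show ?thesis
  proof (rule eventually_mono[OF ev], intro ballI)
    fix n z assume H: "\<forall>x\<in>cball 0 \<rho>. cmod (qf (fs n) x - Q x) < \<epsilon> / 4" and z: "z \<in> ball (0::complex) 1"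
    show "cmod (qf (fs n) z - Q z) \<le> \<epsilon>"
    proof (cases "cmod z \<le> \<rho>")
      case True
      then have "z \<in> cball 0 \<rho>" by simp
      then have "cmod (qf (fs n) z - Q z) < \<epsilon> / 4" using H by blast
      then show ?thesis using ep by linarith
    next
      case False
      then have zn: "z \<noteq> 0" "1/2 < cmod z" using \<rho> by auto
      have rz: "of_real \<rho> * z \<in> cball 0 \<rho>" using scal_ball[OF \<rho>01 z] by simp
      have rzb: "cmod (of_real \<rho> * z) \<le> 1" using scal_ball[OF \<rho>01 z] \<rho>01 by simp
      have e1: "qf (fs n) z - Q z = (fs n z - F z) / z" using zn by (simp add: qf_def F_def field_simps)
      have e2: "fs n z - F z = (fs n z - fs n (of_real \<rho> * z)) + (of_real \<rho> * z) * (qf (fs n) (of_real \<rho> * z) - Q (of_real \<rho> * z))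
                 - (F z - F (of_real \<rho> * z))"
        using f_eq_qf[of "fs n" "of_real \<rho> * z", OF f0] by (simp add: F_def algebra_simps)
      have m: "cmod ((of_real \<rho> * z) * (qf (fs n) (of_real \<rho> * z) - Q (of_real \<rho> * z))) \<le> \<epsilon> / 4"
      proof -
        have "cmod (of_real \<rho> * z) * cmod (qf (fs n) (of_real \<rho> * z) - Q (of_real \<rho> * z))
              \<le> cmod (qf (fs n) (of_real \<rho> * z) - Q (of_real \<rho> * z))"
          by (rule mult_left_le_one_le) (use rzb in auto)
        also have "\<dots> \<le> \<epsilon> / 4" using bspec[OF H rz] by linarith
        finally show ?thesis by (simp only: norm_mult)
      qed
      have "cmod (fs n z - F z) \<le> \<tau> + \<epsilon> / 4 + \<tau>"
      proof -
        let ?a = "fs n z - fs n (of_real \<rho> * z)"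
        let ?b = "(of_real \<rho> * z) * (qf (fs n) (of_real \<rho> * z) - Q (of_real \<rho> * z))"
        let ?c = "F z - F (of_real \<rho> * z)"
        have "cmod (?a + ?b - ?c) \<le> cmod (?a + ?b) + cmod ?c" by (rule norm_triangle_ineq4)
        also have "\<dots> \<le> cmod ?a + cmod ?b + cmod ?c" using norm_triangle_ineq[of ?a ?b] by simp
        also have "\<dots> \<le> \<tau> + \<epsilon> / 4 + \<tau>" using tail[OF z, of n] tailF[OF z] m by simp
        finally show ?thesis unfolding e2 .
      qed
      then have "cmod (fs n z - F z) \<le> \<epsilon> / 2" using \<tau> by simp
      then have "cmod (fs n z - F z) / cmod z \<le> (\<epsilon> / 2) / (1/2)"
        using zn ep by (intro frac_le) auto
      then show ?thesis using e1 by (simp add: norm_divide)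
    qed
  qed
qed



lemma K0_compact:
  assumes al: "0 < \<alpha>" "\<alpha> < 1"
  shows "bloch_compact \<alpha> (\<lambda>f z. - cesaro \<alpha> f z)"
  unfolding bloch_compact_def
proof (intro conjI K0_linear[OF al] allI impI)
  fix fs :: "nat \<Rightarrow> complex \<Rightarrow> complex" and B :: real
  assume A: "\<forall>n. fs n \<in> bloch0 \<alpha> \<and> bloch_norm \<alpha> (fs n) \<le> B"
  have hol: "fs n holomorphic_on ball 0 1" and f0: "fs n 0 = 0" and bbn: "bb \<alpha> (fs n)" for n
    using A by (auto simp: bloch0_iff bb_def)
  have wb: "(1 - (cmod w)\<^sup>2) powr \<alpha> * cmod (deriv (fs n) w) \<le> B" if "w \<in> ball 0 1" for n w
    using bb_upper[OF bbn that] A by (meson order_trans)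
  define M where "M = B / (1 - \<alpha>)"
  have qbd: "cmod (qf (fs n) z) \<le> M" if "z \<in> ball 0 1" for n z
    unfolding M_def by (rule q_bound[OF hol f0 wb al that])
  define \<H> where "\<H> = {h. h holomorphic_on ball 0 1 \<and> (\<forall>z\<in>ball 0 1. cmod (h z) \<le> M)}"
  obtain Q r where Qh: "Q holomorphic_on ball 0 1" and r: "strict_mono (r :: nat \<Rightarrow> nat)"
    and conv: "\<And>x. x \<in> ball 0 1 \<Longrightarrow> ((\<lambda>n. qf (fs (r n)) x) \<longlongrightarrow> Q x) sequentially"
    and unif: "\<And>K. \<lbrakk>compact K; K \<subseteq> ball 0 1\<rbrakk> \<Longrightarrow> uniform_limit K ((\<lambda>n. qf (fs n)) \<circ> r) Q sequentially"
  proof (rule Montel[of "ball 0 1" \<H> "\<lambda>n. qf (fs n)"])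
    show "\<And>h. h \<in> \<H> \<Longrightarrow> h holomorphic_on ball 0 1" by (auto simp: \<H>_def)
    show "\<exists>B. \<forall>h\<in>\<H>. \<forall>z\<in>K. cmod (h z) \<le> B" if "compact K" "K \<subseteq> ball 0 1" for K
      using that by (auto simp: \<H>_def intro!: exI[of _ M])
    show "range (\<lambda>n. qf (fs n)) \<subseteq> \<H>"
      using qbd qf_holo[OF hol f0] by (auto simp: \<H>_def)
  qed auto
  have Qbd: "cmod (Q z) \<le> M" if "z \<in> ball 0 1" for z
    by (rule Lim_norm_ubound[OF trivial_limit_sequentially conv[OF that]]) (use qbd that in auto)
  define F where "F z = z * Q z" for z
  have Fh: "F holomorphic_on ball 0 1" unfolding F_def by (intro holomorphic_intros Qh)
  have F0: "F 0 = 0" by (simp add: F_def)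
  have qfF: "qf F z = Q z" if "z \<in> ball 0 1" for z
  proof (cases "z = 0")
    case True
    have dQ: "(Q has_field_derivative deriv Q 0) (at 0)"
      using holomorphic_derivI[OF Qh open_ball, of 0] by simp
    have "((\<lambda>z. z * Q z) has_field_derivative Q 0) (at 0)"
      using DERIV_mult[OF DERIV_ident dQ] by simp
    then have "deriv F 0 = Q 0" unfolding F_def by (simp add: DERIV_imp_deriv)
    then show ?thesis using True by (simp add: qf_def)
  qed (simp add: qf_def F_def)
  define G where "G = cesaro \<alpha> F"
  have Gh: "G holomorphic_on ball 0 1" unfolding G_def by (rule ces_holo[OF Fh F0])
  have dG: "deriv G z = Q z / (1 - z) powr (complex_of_real \<alpha>)" if "z \<in> ball 0 1" for z
    unfolding G_def using ces_deriv_eq[OF Fh F0 that] qfF[OF that] by (simp add: psi_def)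
  have "G \<in> bloch0 \<alpha>"
    unfolding bloch0_iff
  proof (intro conjI bb_intro[where B="2 * M"] Gh)
    fix z :: complex assume z: "z \<in> ball 0 1"
    have "(1 - (cmod z)\<^sup>2) powr \<alpha> * cmod (deriv G z) \<le> 2 * cmod (Q z)"
      using wt_ineq[OF z al(1)] al by (simp add: dG[OF z])
    then show "(1 - (cmod z)\<^sup>2) powr \<alpha> * cmod (deriv G z) \<le> 2 * M" using Qbd[OF z] by simp
  qed (simp add: G_def ces_zero)
  then have g: "(\<lambda>z. - G z) \<in> bloch0 \<alpha>" by (rule neg_bloch0)
  define D where "D n = (\<lambda>z. - cesaro \<alpha> (fs (r n)) z - - G z)" for n
  have Dh: "D n holomorphic_on ball 0 1" for n
    unfolding D_def by (intro holomorphic_intros ces_holo[OF hol f0] Gh)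
  have Dwt: "(1 - (cmod z)\<^sup>2) powr \<alpha> * cmod (deriv (D n) z) \<le> 2 * cmod (qf (fs (r n)) z - Q z)"
    if z: "z \<in> ball 0 1" for n z
  proof -
    have h1: "(\<lambda>w. - cesaro \<alpha> (fs (r n)) w) holomorphic_on ball 0 1"
      by (intro holomorphic_intros ces_holo[OF hol f0])
    have h2: "(\<lambda>w. - G w) holomorphic_on ball 0 1" by (intro holomorphic_intros Gh)
    have "deriv (D n) z = deriv (\<lambda>w. - cesaro \<alpha> (fs (r n)) w) z - deriv (\<lambda>w. - G w) z"
      unfolding D_def by (rule deriv_diff_ball[OF h1 h2 z])
    also have "\<dots> = - deriv (cesaro \<alpha> (fs (r n))) z + deriv G z"
      using deriv_minus_ball[OF ces_holo[OF hol f0] z] deriv_minus_ball[OF Gh z] by simp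
    also have "\<dots> = - ((qf (fs (r n)) z - Q z) / (1 - z) powr (complex_of_real \<alpha>))"
      using ces_deriv_eq[OF hol f0 z] dG[OF z] by (simp add: psi_def diff_divide_distrib)
    finally have "cmod (deriv (D n) z) = cmod ((qf (fs (r n)) z - Q z) / (1 - z) powr (complex_of_real \<alpha>))"
      by simp
    then show ?thesis using wt_ineq[OF z al(1)] al by simp
  qed
  have Dbb: "bb \<alpha> (D n)" for n
  proof (rule bb_intro[OF Dh, where B="2 * (2 * M)"])
    fix z :: complex assume z: "z \<in> ball 0 1"
    have "cmod (qf (fs (r n)) z - Q z) \<le> 2 * M"
      using norm_triangle_ineq4[of "qf (fs (r n)) z" "Q z"] qbd[OF z, of "r n"] Qbd[OF z] by simp
    then show "(1 - (cmod z)\<^sup>2) powr \<alpha> * cmod (deriv (D n) z) \<le> 2 * (2 * M)"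
      using Dwt[OF z, of n] by simp
  qed
  have UC: "eventually (\<lambda>n. \<forall>z\<in>ball 0 1. cmod (qf (fs (r n)) z - Q z) \<le> e) sequentially" if "e > 0" for e
  proof (rule unif_core[OF al, where fs="\<lambda>n. fs (r n)" and B=B])
    show "\<And>\<rho> e. \<rho> < 1 \<Longrightarrow> e > 0 \<Longrightarrow> eventually (\<lambda>n. \<forall>x\<in>cball 0 \<rho>. cmod (qf (fs (r n)) x - Q x) < e) sequentially"
    proof -
      fix \<rho> e :: real assume "\<rho> < 1" "e > 0"
      have "cball 0 \<rho> \<subseteq> ball (0::complex) 1" using \<open>\<rho> < 1\<close> by auto
      from uniform_limitD[OF unif[OF compact_cball this] \<open>e > 0\<close>]
      show "eventually (\<lambda>n. \<forall>x\<in>cball 0 \<rho>. cmod (qf (fs (r n)) x - Q x) < e) sequentially"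
        by (simp add: dist_norm)
    qed
  qed (use hol f0 wb conv that in auto)
  have "(\<lambda>n. bloch_norm \<alpha> (D n)) \<longlonglongrightarrow> 0"
  proof (rule LIMSEQ_I)
    fix e :: real assume e: "0 < e"
    obtain N where N: "\<And>n. n \<ge> N \<Longrightarrow> \<forall>z\<in>ball 0 1. cmod (qf (fs (r n)) z - Q z) \<le> e / 4"
      using UC[of "e/4"] e by (auto simp: eventually_sequentially)
    have "norm (bloch_norm \<alpha> (D n) - 0) < e" if "n \<ge> N" for n
    proof -
      have "bloch_norm \<alpha> (D n) \<le> 2 * (e / 4)"
        by (rule bloch_norm_le) (use Dwt N[OF that] in \<open>meson order_trans mult_left_mono zero_le_numeral\<close>)
      moreover have "0 \<le> bloch_norm \<alpha> (D n)" by (rule bb_nonneg[OF Dbb])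
      ultimately show ?thesis using e by simp
    qed
    then show "\<exists>no. \<forall>n\<ge>no. norm (bloch_norm \<alpha> (D n) - 0) < e" by blast
  qed
  then show "\<exists>r g. strict_mono r \<and> g \<in> bloch0 \<alpha> \<and>
           (\<lambda>n. bloch_norm \<alpha> (\<lambda>z. - cesaro \<alpha> (fs (r n)) z - g z)) \<longlonglongrightarrow> 0"
    using r g unfolding D_def by blast
qed



lemma bb_diff: "bb \<alpha> f \<Longrightarrow> bb \<alpha> g \<Longrightarrow> bb \<alpha> (\<lambda>z. f z - g z)"
proof -
  assume f: "bb \<alpha> f" and g: "bb \<alpha> g"
  have hf: "f holomorphic_on ball 0 1" and hg: "g holomorphic_on ball 0 1" using f g by (auto simp: bb_def)
  show ?thesis
  proof (rule bb_intro[where B="bloch_norm \<alpha> f + bloch_norm \<alpha> g"])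
    show "(\<lambda>z. f z - g z) holomorphic_on ball 0 1" by (intro holomorphic_intros hf hg)
    fix z :: complex assume z: "z \<in> ball 0 1"
    have "(1 - (cmod z)\<^sup>2) powr \<alpha> * cmod (deriv (\<lambda>z. f z - g z) z)
         \<le> (1 - (cmod z)\<^sup>2) powr \<alpha> * cmod (deriv f z) + (1 - (cmod z)\<^sup>2) powr \<alpha> * cmod (deriv g z)"
      unfolding deriv_diff_ball[OF hf hg z] distrib_left[symmetric]
      by (intro mult_left_mono norm_triangle_ineq4) auto
    then show "(1 - (cmod z)\<^sup>2) powr \<alpha> * cmod (deriv (\<lambda>z. f z - g z) z) \<le> bloch_norm \<alpha> f + bloch_norm \<alpha> g"
      using bb_upper[OF f z] bb_upper[OF g z] by linarith
  qed
qed

lemma bloch_norm_add_le: "bb \<alpha> f \<Longrightarrow> bb \<alpha> g \<Longrightarrow> bloch_norm \<alpha> (\<lambda>z. f z + g z) \<le> bloch_norm \<alpha> f + bloch_norm \<alpha> g"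
proof -
  assume f: "bb \<alpha> f" and g: "bb \<alpha> g"
  have hf: "f holomorphic_on ball 0 1" and hg: "g holomorphic_on ball 0 1" using f g by (auto simp: bb_def)
  show ?thesis
  proof (rule bloch_norm_le)
    fix z :: complex assume z: "z \<in> ball 0 1"
    have "(1 - (cmod z)\<^sup>2) powr \<alpha> * cmod (deriv (\<lambda>z. f z + g z) z)
         \<le> (1 - (cmod z)\<^sup>2) powr \<alpha> * cmod (deriv f z) + (1 - (cmod z)\<^sup>2) powr \<alpha> * cmod (deriv g z)"
      unfolding deriv_add_ball[OF hf hg z] distrib_left[symmetric]
      by (intro mult_left_mono norm_triangle_ineq) auto
    then show "(1 - (cmod z)\<^sup>2) powr \<alpha> * cmod (deriv (\<lambda>z. f z + g z) z) \<le> bloch_norm \<alpha> f + bloch_norm \<alpha> g"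
      using bb_upper[OF f z] bb_upper[OF g z] by linarith
  qed
qed

lemma compact_bounded:
  assumes K: "bloch_compact \<alpha> K"
  shows "\<exists>C. \<forall>f\<in>bloch0 \<alpha>. bloch_norm \<alpha> f \<le> 1 \<longrightarrow> bloch_norm \<alpha> (K f) \<le> C"
proof (rule ccontr)
  assume "\<not> ?thesis"
  then have "\<forall>n::nat. \<exists>f. f \<in> bloch0 \<alpha> \<and> bloch_norm \<alpha> f \<le> 1 \<and> bloch_norm \<alpha> (K f) > real n"
    by (meson not_le)
  then obtain fs where fs: "\<And>n. fs n \<in> bloch0 \<alpha> \<and> bloch_norm \<alpha> (fs n) \<le> 1 \<and> bloch_norm \<alpha> (K (fs n)) > real n"
    by metis
  have lin: "bloch_linear \<alpha> K" using K by (simp add: bloch_compact_def)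
  have Kb: "K f \<in> bloch0 \<alpha>" if "f \<in> bloch0 \<alpha>" for f using lin that by (simp add: bloch_linear_def)
  obtain r g where r: "strict_mono r" and g: "g \<in> bloch0 \<alpha>"
    and lim: "(\<lambda>n. bloch_norm \<alpha> (\<lambda>z. K (fs (r n)) z - g z)) \<longlonglongrightarrow> 0"
    using K fs unfolding bloch_compact_def by blast
  obtain N where N: "\<And>n. n \<ge> N \<Longrightarrow> bloch_norm \<alpha> (\<lambda>z. K (fs (r n)) z - g z) < 1"
    using lim[THEN order_tendstoD(2), of 1] by (auto simp: eventually_sequentially)
  define n where "n = max N (nat \<lceil>1 + bloch_norm \<alpha> g\<rceil>)"
  have bbK: "bb \<alpha> (K (fs (r n)))" using Kb fs by (simp add: bloch0_iff)
  have bbg: "bb \<alpha> g" using g by (simp add: bloch0_iff)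
  have "bloch_norm \<alpha> (K (fs (r n))) = bloch_norm \<alpha> (\<lambda>z. (K (fs (r n)) z - g z) + g z)" by simp
  also have "\<dots> \<le> bloch_norm \<alpha> (\<lambda>z. K (fs (r n)) z - g z) + bloch_norm \<alpha> g"
    by (rule bloch_norm_add_le[OF bb_diff[OF bbK bbg] bbg])
  also have "\<dots> < 1 + bloch_norm \<alpha> g" using N[of n] by (simp add: n_def)
  also have "\<dots> \<le> real n" unfolding n_def by linarith
  also have "real n \<le> real (r n)" using seq_suble[OF r, of n] by simp
  finally show False using fs[of "r n"] by simp
qed

lemma cesaro_zero_fun: "cesaro b (\<lambda>z. 0) z = 0"
  by (simp add: cesaro_def)

lemma opnorm_nonneg:
  assumes al: "0 < \<alpha>" "\<alpha> < 1" and K: "bloch_compact \<alpha> K"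
  shows "0 \<le> bloch_opnorm \<alpha> (\<lambda>f z. cesaro \<alpha> f z + K f z)"
proof -
  obtain C where C: "\<And>f. f \<in> bloch0 \<alpha> \<Longrightarrow> bloch_norm \<alpha> f \<le> 1 \<Longrightarrow> bloch_norm \<alpha> (K f) \<le> C"
    using compact_bounded[OF K] by blast
  have lin: "bloch_linear \<alpha> K" using K by (simp add: bloch_compact_def)
  have Kb: "K f \<in> bloch0 \<alpha>" if "f \<in> bloch0 \<alpha>" for f using lin that by (simp add: bloch_linear_def)
  define X where "X = {bloch_norm \<alpha> (\<lambda>z. cesaro \<alpha> f z + K f z) | f. f \<in> bloch0 \<alpha> \<and> bloch_norm \<alpha> f \<le> 1}"
  have "bloch_norm \<alpha> (\<lambda>z. cesaro \<alpha> f z + K f z) \<le> 2 / (1 - \<alpha>) + C"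
    if f: "f \<in> bloch0 \<alpha>" "bloch_norm \<alpha> f \<le> 1" for f
  proof -
    have "bloch_norm \<alpha> (\<lambda>z. cesaro \<alpha> f z + K f z) \<le> bloch_norm \<alpha> (cesaro \<alpha> f) + bloch_norm \<alpha> (K f)"
      by (rule bloch_norm_add_le) (use ces_bloch0[OF f(1) al] Kb[OF f(1)] in \<open>auto simp: bloch0_iff\<close>)
    also have "bloch_norm \<alpha> (cesaro \<alpha> f) \<le> 2 * (bloch_norm \<alpha> f / (1 - \<alpha>))"
      by (rule bloch_norm_le, rule ces_wt[OF f(1) al])
    also have "2 * (bloch_norm \<alpha> f / (1 - \<alpha>)) \<le> 2 / (1 - \<alpha>)"
      using f(2) al by (simp add: divide_right_mono)
    finally show ?thesis using C[OF f] by linarith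
  qed
  then have bdd: "bdd_above X" unfolding X_def by (intro bdd_aboveI[where M="2 / (1 - \<alpha>) + C"]) auto
  have "bloch_norm \<alpha> (\<lambda>z. cesaro \<alpha> (\<lambda>z. 0) z + K (\<lambda>z. 0) z) = bloch_norm \<alpha> (\<lambda>z. 0)"
  proof (rule bloch_norm_cong)
    fix z :: complex assume z: "z \<in> ball 0 1"
    have M: "\<forall>f\<in>bloch0 \<alpha>. \<forall>c. \<forall>z\<in>ball 0 1. K (\<lambda>w. c * f w) z = c * K f z"
      using lin by (simp add: bloch_linear_def)
    have M0: "\<forall>c. \<forall>z\<in>ball 0 1. K (\<lambda>w. c * 0) z = c * K (\<lambda>z. 0) z"
      using bspec[OF M zero_bloch0[of \<alpha>]] by simp
    have "K (\<lambda>w. 0 * 0) z = 0 * K (\<lambda>z. 0) z" using M0 z by blast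
    then show "cesaro \<alpha> (\<lambda>z. 0) z + K (\<lambda>z. 0) z = 0" by (simp add: cesaro_zero_fun)
  qed
  then have "0 \<in> X" unfolding X_def using zero_bloch0[of \<alpha>]
    by (auto simp: bloch_norm_zero intro!: exI[of _ "\<lambda>z. 0"])
  then have "0 \<le> Sup X" by (rule cSup_upper[OF _ bdd])
  then show ?thesis by (simp add: bloch_opnorm_def X_def)
qed

theorem theorem4p4:
  fixes \<alpha> \<beta> :: real
  assumes "0 < \<alpha>" and "\<alpha> < 1" and "\<beta> = \<alpha>"
  shows "bloch_essnorm \<alpha> (cesaro \<beta>) = 0"
proof -
  have al: "0 < \<alpha>" "\<alpha> < 1" using assms by auto
  define S where "S = {bloch_opnorm \<alpha> (\<lambda>f z. cesaro \<alpha> f z + K f z) | K. bloch_compact \<alpha> K}"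
  have eq: "bloch_opnorm \<alpha> (\<lambda>f z. cesaro \<alpha> f z + (\<lambda>f z. - cesaro \<alpha> f z) f z) = 0"
  proof -
    have "{bloch_norm \<alpha> ((\<lambda>f z. cesaro \<alpha> f z + (\<lambda>f z. - cesaro \<alpha> f z) f z) f) | f. f \<in> bloch0 \<alpha> \<and> bloch_norm \<alpha> f \<le> 1} = {0}"
      using zero_bloch0[of \<alpha>] by (auto simp: bloch_norm_zero intro!: exI[of _ "\<lambda>z. 0"])
    then show ?thesis by (simp add: bloch_opnorm_def)
  qed
  have "0 \<in> S" unfolding S_def
    by (rule CollectI, rule exI[of _ "\<lambda>f z. - cesaro \<alpha> f z"]) (use eq K0_compact[OF al] in simp)
  moreover have "\<And>x. x \<in> S \<Longrightarrow> 0 \<le> x" unfolding S_def using opnorm_nonneg[OF al] by blast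
  ultimately have "Inf S = 0" by (rule cInf_eq_minimum)
  then show ?thesis using assms(3) by (simp add: bloch_essnorm_def S_def)
qed


end
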